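(* For every compact set $K\subset\mathbb C^2\setminus C(p)$ there exists $\eta>0$ such that $K\subset f_a(V_-)$ for all $a$ with $0<|a|<\eta$. In particular every point of $\mathbb C^2\setminus C(p)$ lies in $f_a(V_-)$ for all sufficiently small $a\neq0$.
   Context: $p(x)=x^2+c$, $f_a(x,y)=(p(x)-ay,\,x)$, $C(p)=\{(x,y):p(y)=x\}$. Here $\alpha>0$ is fixed and $V_-=\{(x,y):|y|>|x|,\ |y|>\alpha\}$. *)

theory Defs
  imports "HOL-Analysis.Analysis"
begin

definition quadp :: "complex \<Rightarrow> complex \<Rightarrow> complex" where
  "quadp c x = x^2 + c"

definition henon :: "complex \<Rightarrow> complex \<Rightarrow> complex \<times> complex \<Rightarrow> complex \<times> complex" where
  "henon c a = (\<lambda>(x, y). (quadp c x - a * y, x))"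

definition Cp :: "complex \<Rightarrow> (complex \<times> complex) set" where
  "Cp c = {(x, y). quadp c y = x}"

definition Vminus :: "real \<Rightarrow> (complex \<times> complex) set" where
  "Vminus \<alpha> = {(x, y). cmod y > cmod x \<and> cmod y > \<alpha>}"

end

theory Submission
  imports Defs
begin

lemma point_lemma:
  fixes c a X Y :: complex and \<alpha> \<delta> M :: real
  assumes "\<alpha> > 0" "\<delta> > 0" "M \<ge> 0" "cmod (quadp c Y - X) \<ge> \<delta>" "cmod Y \<le> M"
    "0 < cmod a" "cmod a < \<delta> / (M + \<alpha> + 1)"
  shows "(X, Y) \<in> henon c a ` Vminus \<alpha>"
proof -
  define y where "y = (quadp c Y - X) / a"
  have a0: "a \<noteq> 0" using assms by auto
  have "cmod a * (M + \<alpha> + 1) < \<delta>" using assms by (simp add: pos_less_divide_eq mult.commute)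
  hence "cmod a * (M + \<alpha> + 1) < cmod (quadp c Y - X)" using assms by linarith
  hence "M + \<alpha> + 1 < cmod (quadp c Y - X) / cmod a" using assms(6)
    by (simp add: pos_less_divide_eq mult.commute)
  hence hy: "M + \<alpha> + 1 < cmod y" by (simp add: y_def norm_divide)
  have "(Y, y) \<in> Vminus \<alpha>" using hy assms unfolding Vminus_def by auto
  moreover have "henon c a (Y, y) = (X, Y)" using a0 by (simp add: henon_def y_def)
  ultimately show ?thesis by force
qed

theorem lemma4p9:
  fixes c :: complex and \<alpha> :: real
  assumes "\<alpha> > 0"
  shows "(\<forall>K. compact K \<and> K \<subseteq> UNIV - Cp c \<longrightarrow>
            (\<exists>\<eta>>0. \<forall>a::complex. 0 < cmod a \<and> cmod a < \<eta> \<longrightarrow> K \<subseteq> henon c a ` Vminus \<alpha>))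
       \<and> (\<forall>z \<in> UNIV - Cp c. \<exists>\<eta>>0. \<forall>a::complex. 0 < cmod a \<and> cmod a < \<eta> \<longrightarrow> z \<in> henon c a ` Vminus \<alpha>)"
proof -
  have P1: "\<exists>\<eta>>0. \<forall>a::complex. 0 < cmod a \<and> cmod a < \<eta> \<longrightarrow> K \<subseteq> henon c a ` Vminus \<alpha>"
    if K: "compact K" "K \<subseteq> UNIV - Cp c" for K
  proof (cases "K = {}")
    case True then show ?thesis by (intro exI[of _ 1]) auto
  next
    case False
    let ?g = "\<lambda>z::complex\<times>complex. cmod (quadp c (snd z) - fst z)"
    have "continuous_on K ?g" unfolding quadp_def by (intro continuous_intros)
    then obtain z0 where z0: "z0 \<in> K" "\<forall>z\<in>K. ?g z0 \<le> ?g z"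
      using continuous_attains_inf[OF K(1) False] by blast
    define \<delta> where "\<delta> = ?g z0"
    have "z0 \<notin> Cp c" using z0 K by auto
    hence d0: "\<delta> > 0" unfolding \<delta>_def Cp_def by (cases z0) auto
    obtain M0 where M0: "\<forall>z\<in>K. norm z \<le> M0" using compact_imp_bounded[OF K(1)] bounded_iff by blast
    define M where "M = max M0 0"
    have M: "M \<ge> 0" "\<forall>z\<in>K. cmod (snd z) \<le> M"
    proof -
      have "cmod (snd z) \<le> M" if "z \<in> K" for z
        using M0 that norm_snd_le[of "snd z" "fst z"] unfolding M_def by force
      then show "M \<ge> 0" "\<forall>z\<in>K. cmod (snd z) \<le> M" unfolding M_def by auto
    qed
    show ?thesis
    proof (intro exI[of _ "\<delta> / (M + \<alpha> + 1)"] conjI allI impI subsetI)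
      show "\<delta> / (M + \<alpha> + 1) > 0" using d0 M assms by simp
    next
      fix a :: complex and z assume a: "0 < cmod a \<and> cmod a < \<delta> / (M + \<alpha> + 1)" and z: "z \<in> K"
      obtain X Y where zXY: "z = (X, Y)" by (cases z)
      show "z \<in> henon c a ` Vminus \<alpha>" unfolding zXY
        apply (rule point_lemma[OF assms d0 M(1)])
        using z0 z M a zXY unfolding \<delta>_def by auto
    qed
  qed
  show ?thesis
  proof
    show "\<forall>K. compact K \<and> K \<subseteq> UNIV - Cp c \<longrightarrow> (\<exists>\<eta>>0. \<forall>a::complex. 0 < cmod a \<and> cmod a < \<eta> \<longrightarrow> K \<subseteq> henon c a ` Vminus \<alpha>)"
      using P1 by blast
    show "\<forall>z \<in> UNIV - Cp c. \<exists>\<eta>>0. \<forall>a::complex. 0 < cmod a \<and> cmod a < \<eta> \<longrightarrow> z \<in> henon c a ` Vminus \<alpha>"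
    proof
      fix z assume "z \<in> UNIV - Cp c"
      then obtain \<eta> where "\<eta> > 0" "\<forall>a::complex. 0 < cmod a \<and> cmod a < \<eta> \<longrightarrow> {z} \<subseteq> henon c a ` Vminus \<alpha>"
        using P1[of "{z}"] by auto
      then show "\<exists>\<eta>>0. \<forall>a::complex. 0 < cmod a \<and> cmod a < \<eta> \<longrightarrow> z \<in> henon c a ` Vminus \<alpha>" by auto
    qed
  qed
qed

end
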